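(* Let $\mathbb O$ be a finite set of consecutive integers containing $0$, and let $\theta=0$. If $x(0)\in\mathbb O^n$ has no coordinate equal to $0$, then there exists a finite legal update sequence from $x(0)$ along which the system reaches, in finite time, either a consensus state $(z,\dots,z)$ with $z\neq 0$ or a non-consensus equilibrium.
   Context: Let $n\ge1$, $\mathcal V=\{1,\dots,n\}$, and let $W=(w_{ij})$ be an $n\times n$ row-stochastic matrix. For $x\in\mathbb O^n$, $i\in\mathcal V$, $z\in\mathbb O$, define $C^i_{\mathrm{social}}(z;x)=\sum_{j=1}^n w_{ij}|z-x_j|$ and $P_i(x)=\{z\in\mathbb O: C^i_{\mathrm{social}}(z;x)\le C^i_{\mathrm{social}}(x_i;x),\ |z-\theta|\le |x_i-\theta|\}$ (Pareto improvements between social cost and cognitive cost $|z-\theta|$). A legal update sequence from $x(0)$ is a finite sequence $(i_1,z_1),\dots,(i_T,z_T)$ with $i_t\in\mathcal V$, generating $x(1),\dots,x(T)$ where $x(t)$ is obtained from $x(t-1)$ by setting coordinate $i_t$ to $z_t$, such that $z_t\in P_{i_t}(x(t-1))$ for every $t$. An equilibrium is a state $x^*$ with $P_i(x^* )=\{x_i^*\}$ for all $i\in\mathcal V$; it is non-consensus if not all coordinates are equal. *)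

theory Defs
  imports Complex_Main
begin

(* Agents are the elements of a finite type 'v (V = {1..n}, n = CARD('v) >= 1);
   states are functions 'v => int; opinion set Ops :: int set. *)

definition row_stochastic :: "('v::finite \<Rightarrow> 'v \<Rightarrow> real) \<Rightarrow> bool" where
  "row_stochastic W \<longleftrightarrow> (\<forall>i j. 0 \<le> W i j) \<and> (\<forall>i. (\<Sum>j\<in>UNIV. W i j) = 1)"

definition social_cost :: "('v::finite \<Rightarrow> 'v \<Rightarrow> real) \<Rightarrow> ('v \<Rightarrow> int) \<Rightarrow> 'v \<Rightarrow> int \<Rightarrow> real" where
  "social_cost W x i z = (\<Sum>j\<in>UNIV. W i j * real_of_int \<bar>z - x j\<bar>)"

definition pareto_set :: "int set \<Rightarrow> int \<Rightarrow> ('v::finite \<Rightarrow> 'v \<Rightarrow> real) \<Rightarrow> ('v \<Rightarrow> int) \<Rightarrow> 'v \<Rightarrow> int set" where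
  "pareto_set Ops \<theta> W x i = {z \<in> Ops. social_cost W x i z \<le> social_cost W x i (x i) \<and> \<bar>z - \<theta>\<bar> \<le> \<bar>x i - \<theta>\<bar>}"

fun legal_seq :: "int set \<Rightarrow> int \<Rightarrow> ('v::finite \<Rightarrow> 'v \<Rightarrow> real) \<Rightarrow> ('v \<Rightarrow> int) \<Rightarrow> ('v \<times> int) list \<Rightarrow> bool" where
  "legal_seq Ops \<theta> W x [] = True"
| "legal_seq Ops \<theta> W x ((i, z) # rest) = (z \<in> pareto_set Ops \<theta> W x i \<and> legal_seq Ops \<theta> W (x(i := z)) rest)"

fun run_seq :: "('v \<Rightarrow> int) \<Rightarrow> ('v \<times> int) list \<Rightarrow> ('v \<Rightarrow> int)" where
  "run_seq x [] = x"
| "run_seq x ((i, z) # rest) = run_seq (x(i := z)) rest"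

definition equilibrium :: "int set \<Rightarrow> int \<Rightarrow> ('v::finite \<Rightarrow> 'v \<Rightarrow> real) \<Rightarrow> ('v \<Rightarrow> int) \<Rightarrow> bool" where
  "equilibrium Ops \<theta> W x \<longleftrightarrow> (\<forall>i. pareto_set Ops \<theta> W x i = {x i})"

definition is_consensus :: "('v \<Rightarrow> int) \<Rightarrow> bool" where
  "is_consensus x \<longleftrightarrow> (\<exists>z. \<forall>i. x i = z)"

end

theory Submission
  imports Defs
begin


lemma legal_append:
  "legal_seq Os t W x (s1 @ s2) = (legal_seq Os t W x s1 \<and> legal_seq Os t W (run_seq x s1) s2)"
proof (induction s1 arbitrary: x)
  case Nil then show ?case by simp
next
  case (Cons p s)
  obtain i z where p: "p = (i, z)" by (cases p)
  show ?case unfolding p append_Cons run_seq.simps legal_seq.simps Cons.IH by blast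
qed

lemma run_append: "run_seq x (s1 @ s2) = run_seq (run_seq x s1) s2"
proof (induction s1 arbitrary: x)
  case Nil then show ?case by simp
next
  case (Cons p s)
  obtain i z where p: "p = (i, z)" by (cases p)
  show ?case unfolding p append_Cons run_seq.simps by (rule Cons.IH)
qed

lemma abs_conv:
  fixes z w v c :: real
  assumes "z \<le> w" "w \<le> v"
  shows "(v - z) * \<bar>w - c\<bar> \<le> (v - w) * \<bar>z - c\<bar> + (w - z) * \<bar>v - c\<bar>"
proof -
  have e: "(v - z) * (w - c) = (v - w) * (z - c) + (w - z) * (v - c)" by (simp add: algebra_simps)
  have "(v - z) * \<bar>w - c\<bar> = \<bar>(v - z) * (w - c)\<bar>" using assms by (simp add: abs_mult)
  also have "\<dots> \<le> \<bar>(v - w) * (z - c)\<bar> + \<bar>(w - z) * (v - c)\<bar>" unfolding e by (rule abs_triangle_ineq)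
  also have "\<dots> = (v - w) * \<bar>z - c\<bar> + (w - z) * \<bar>v - c\<bar>" using assms by (simp add: abs_mult)
  finally show ?thesis .
qed

lemma sc_conv:
  assumes rs: "row_stochastic W" and "z \<le> w" "w \<le> v"
  shows "real_of_int (v - z) * social_cost W x i w \<le>
         real_of_int (v - w) * social_cost W x i z + real_of_int (w - z) * social_cost W x i v"
proof -
  have t: "real_of_int (v - z) * (W i j * real_of_int \<bar>w - x j\<bar>) \<le>
      real_of_int (v - w) * (W i j * real_of_int \<bar>z - x j\<bar>) + real_of_int (w - z) * (W i j * real_of_int \<bar>v - x j\<bar>)" for j
  proof -
    have W0: "0 \<le> W i j" using rs unfolding row_stochastic_def by auto
    have "(real_of_int v - real_of_int z) * \<bar>real_of_int w - real_of_int (x j)\<bar> \<le>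
       (real_of_int v - real_of_int w) * \<bar>real_of_int z - real_of_int (x j)\<bar> + (real_of_int w - real_of_int z) * \<bar>real_of_int v - real_of_int (x j)\<bar>"
      by (rule abs_conv) (use assms in auto)
    from mult_left_mono[OF this W0] show ?thesis by (simp add: algebra_simps)
  qed
  show ?thesis unfolding social_cost_def sum_distrib_left sum.distrib[symmetric]
    by (rule sum_mono) (rule t)
qed

lemma sc_qc:
  assumes rs: "row_stochastic W" and "z \<le> w" "w \<le> v"
  shows "social_cost W x i w \<le> max (social_cost W x i z) (social_cost W x i v)"
proof (cases "z = v")
  case True then show ?thesis using assms by auto
next
  case False
  hence zv: "z < v" using assms by auto
  let ?m = "max (social_cost W x i z) (social_cost W x i v)"
  have "real_of_int (v - z) * social_cost W x i w \<le>
         real_of_int (v - w) * social_cost W x i z + real_of_int (w - z) * social_cost W x i v"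
    by (rule sc_conv[OF assms])
  also have "\<dots> \<le> real_of_int (v - w) * ?m + real_of_int (w - z) * ?m"
    using assms by (intro add_mono mult_left_mono) auto
  also have "\<dots> = real_of_int (v - z) * ?m" by (simp add: algebra_simps)
  finally show ?thesis using zv by simp
qed

lemma t1: "(c::int) \<noteq> 0 \<Longrightarrow> real_of_int \<bar>-1 - c\<bar> - real_of_int \<bar>1 - c\<bar> = 2 * (real_of_int \<bar>0 - c\<bar> - real_of_int \<bar>1 - c\<bar>)"
  by (cases "c \<ge> 1") (simp_all add: abs_if)
lemma t2: "(c::int) \<ge> 1 \<Longrightarrow> W * (real_of_int \<bar>0 - c\<bar> - real_of_int \<bar>1 - c\<bar>) = (W::real)"
  by (simp add: abs_if)
lemma t3: "(c::int) \<le> -1 \<Longrightarrow> W * (real_of_int \<bar>0 - c\<bar> - real_of_int \<bar>-1 - c\<bar>) = (W::real)"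
  by (simp add: abs_if)
lemma t4: "(c::int) \<le> v - 1 \<Longrightarrow> real_of_int \<bar>v - 1 - c\<bar> - real_of_int \<bar>v - c\<bar> = -1"
  by (simp add: abs_if)

lemma sc_diff:
  "social_cost W x j p - social_cost W x j q = (\<Sum>l\<in>UNIV. W j l * (real_of_int \<bar>p - x l\<bar> - real_of_int \<bar>q - x l\<bar>))"
  unfolding social_cost_def by (simp add: sum_subtractf right_diff_distrib)

lemma flip_id:
  assumes "\<forall>l. x l \<noteq> 0"
  shows "social_cost W x j (-1) - social_cost W x j 1 = 2 * (social_cost W x j 0 - social_cost W x j 1)"
proof -
  have pt: "\<And>l. W j l * (real_of_int \<bar>-1 - x l\<bar> - real_of_int \<bar>1 - x l\<bar>) =
        2 * (W j l * (real_of_int \<bar>0 - x l\<bar> - real_of_int \<bar>1 - x l\<bar>))"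
  proof -
    fix l
    have "x l \<noteq> 0" using assms by auto
    hence "real_of_int \<bar>-1 - x l\<bar> - real_of_int \<bar>1 - x l\<bar> = 2 * (real_of_int \<bar>0 - x l\<bar> - real_of_int \<bar>1 - x l\<bar>)"
      by (rule t1)
    then show "?thesis l" by simp
  qed
  then have "(\<Sum>l\<in>UNIV. W j l * (real_of_int \<bar>-1 - x l\<bar> - real_of_int \<bar>1 - x l\<bar>)) =
        (\<Sum>l\<in>UNIV. 2 * (W j l * (real_of_int \<bar>0 - x l\<bar> - real_of_int \<bar>1 - x l\<bar>)))"
    by (rule sum.cong[OF refl])
  then show ?thesis unfolding sc_diff sum_distrib_left[symmetric] .
qed

lemma allpos:
  assumes rs: "row_stochastic W" and "\<forall>l. x l \<ge> 1"
  shows "social_cost W x j 0 - social_cost W x j 1 = 1"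
proof -
  have pt: "\<And>l. W j l * (real_of_int \<bar>0 - x l\<bar> - real_of_int \<bar>1 - x l\<bar>) = W j l"
  proof -
    fix l have "x l \<ge> 1" using assms(2) by auto
    then show "?thesis l" by (rule t2)
  qed
  then have "(\<Sum>l\<in>UNIV. W j l * (real_of_int \<bar>0 - x l\<bar> - real_of_int \<bar>1 - x l\<bar>)) = (\<Sum>l\<in>UNIV. W j l)"
    by (rule sum.cong[OF refl])
  then show ?thesis unfolding sc_diff using rs unfolding row_stochastic_def by simp
qed

lemma allneg:
  assumes rs: "row_stochastic W" and "\<forall>l. x l \<le> -1"
  shows "social_cost W x j 0 - social_cost W x j (-1) = 1"
proof -
  have pt: "\<And>l. W j l * (real_of_int \<bar>0 - x l\<bar> - real_of_int \<bar>-1 - x l\<bar>) = W j l"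
  proof -
    fix l have "x l \<le> -1" using assms(2) by auto
    then show "?thesis l" by (rule t3)
  qed
  then have "(\<Sum>l\<in>UNIV. W j l * (real_of_int \<bar>0 - x l\<bar> - real_of_int \<bar>-1 - x l\<bar>)) = (\<Sum>l\<in>UNIV. W j l)"
    by (rule sum.cong[OF refl])
  then show ?thesis unfolding sc_diff using rs unfolding row_stochastic_def by simp
qed

lemma pres:
  assumes "x k = v" "v > 0" "x j \<le> 0" "c \<le> 0"
  shows "social_cost W (x(j := c)) k (v - 1) - social_cost W (x(j := c)) k v =
         social_cost W x k (v - 1) - social_cost W x k v"
  unfolding sc_diff
proof (rule sum.cong[OF refl])
  fix l
  show "W k l * (real_of_int \<bar>v - 1 - (x(j := c)) l\<bar> - real_of_int \<bar>v - (x(j := c)) l\<bar>) =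
        W k l * (real_of_int \<bar>v - 1 - x l\<bar> - real_of_int \<bar>v - x l\<bar>)"
  proof -
    have "real_of_int \<bar>v - 1 - (x(j := c)) l\<bar> - real_of_int \<bar>v - (x(j := c)) l\<bar> =
          real_of_int \<bar>v - 1 - x l\<bar> - real_of_int \<bar>v - x l\<bar>"
    proof (cases "l = j")
      case True
      have "c \<le> v - 1" "x j \<le> v - 1" using assms by auto
      from t4[OF this(1)] t4[OF this(2)] show ?thesis using True by simp
    next
      case False then show ?thesis by simp
    qed
    then show ?thesis by simp
  qed
qed



lemma pareto_pos:
  assumes rs: "row_stochastic W" and "x i \<in> {a..b}" "x i > 0"
    and "social_cost W x i (x i - 1) > social_cost W x i (x i)"
  shows "pareto_set {a..b} 0 W x i = {x i}"
proof
  show "{x i} \<subseteq> pareto_set {a..b} 0 W x i" using assms(2) unfolding pareto_set_def by auto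
  show "pareto_set {a..b} 0 W x i \<subseteq> {x i}"
  proof
    fix z assume "z \<in> pareto_set {a..b} 0 W x i"
    hence z: "\<bar>z\<bar> \<le> \<bar>x i\<bar>" "social_cost W x i z \<le> social_cost W x i (x i)"
      unfolding pareto_set_def by auto
    show "z \<in> {x i}"
    proof (rule ccontr)
      assume "z \<notin> {x i}"
      hence "z \<le> x i - 1" using z(1) assms(3) by auto
      from sc_qc[OF rs this, of "x i" x i] z(2) assms(4) show False by auto
    qed
  qed
qed

lemma pareto_neg:
  assumes rs: "row_stochastic W" and "x i \<in> {a..b}" "x i < 0"
    and "social_cost W x i (x i + 1) > social_cost W x i (x i)"
  shows "pareto_set {a..b} 0 W x i = {x i}"
proof
  show "{x i} \<subseteq> pareto_set {a..b} 0 W x i" using assms(2) unfolding pareto_set_def by auto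
  show "pareto_set {a..b} 0 W x i \<subseteq> {x i}"
  proof
    fix z assume "z \<in> pareto_set {a..b} 0 W x i"
    hence z: "\<bar>z\<bar> \<le> \<bar>x i\<bar>" "social_cost W x i z \<le> social_cost W x i (x i)"
      unfolding pareto_set_def by auto
    show "z \<in> {x i}"
    proof (rule ccontr)
      assume "z \<notin> {x i}"
      hence "x i + 1 \<le> z" using z(1) assms(3) by auto
      from sc_qc[OF rs _ this, of "x i" x i] z(2) assms(4) show False by auto
    qed
  qed
qed

lemma pareto_zero:
  assumes "x i = 0" "a \<le> 0" "0 \<le> b"
  shows "pareto_set {a..b} 0 W x i = {x i}"
  using assms unfolding pareto_set_def by auto



lemma phase1:
  assumes rs: "row_stochastic W" and ab: "a \<le> 0" "0 \<le> b"
  shows "\<forall>x. (\<Sum>i\<in>UNIV. nat (x i - a)) = n \<longrightarrow> (\<forall>i. x i \<in> {a..b} \<and> x i \<noteq> 0) \<longrightarrow>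
     (\<exists>seq. legal_seq {a..b} 0 W x seq \<and> (\<forall>i. run_seq x seq i \<in> {a..b} \<and> run_seq x seq i \<noteq> 0) \<and>
        (\<forall>j. run_seq x seq j > 0 \<longrightarrow>
           social_cost W (run_seq x seq) j (run_seq x seq j - 1) > social_cost W (run_seq x seq) j (run_seq x seq j)))"
proof (induction n rule: less_induct)
  case (less n)
  show ?case
  proof (intro allI impI)
    fix x :: "'a \<Rightarrow> int"
    assume mu: "(\<Sum>i\<in>UNIV. nat (x i - a)) = n" and hx: "\<forall>i. x i \<in> {a..b} \<and> x i \<noteq> 0"
    show "\<exists>seq. legal_seq {a..b} 0 W x seq \<and> (\<forall>i. run_seq x seq i \<in> {a..b} \<and> run_seq x seq i \<noteq> 0) \<and>
        (\<forall>j. run_seq x seq j > 0 \<longrightarrow>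
           social_cost W (run_seq x seq) j (run_seq x seq j - 1) > social_cost W (run_seq x seq) j (run_seq x seq j))"
    proof (cases "\<exists>j. x j > 0 \<and> social_cost W x j (x j - 1) \<le> social_cost W x j (x j)")
      case False
      then show ?thesis using hx by (intro exI[of _ "[]"]) (auto simp: not_le)
    next
      case True
      then obtain j where j: "x j > 0" "social_cost W x j (x j - 1) \<le> social_cost W x j (x j)" by auto
      define z where "z = (if x j \<ge> 2 then x j - 1 else -1)"
      have zP: "z \<in> pareto_set {a..b} 0 W x j \<and> z \<noteq> 0 \<and> z < x j"
      proof (cases "x j \<ge> 2")
        case True
        then show ?thesis using j hx[rule_format, of j] ab unfolding z_def pareto_set_def by auto
      next
        case False
        hence x1: "x j = 1" using j by auto
        have nz: "\<forall>l. x l \<noteq> 0" using hx by auto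
        have c0: "social_cost W x j 0 \<le> social_cost W x j 1" using j x1 by simp
        have cm: "social_cost W x j (-1) \<le> social_cost W x j 1" using flip_id[OF nz, of W j] c0 by simp
        have "\<exists>l. x l \<le> -1"
        proof (rule ccontr)
          assume "\<not> (\<exists>l. x l \<le> -1)"
          have "\<forall>l. x l \<ge> 1"
          proof
            fix l have "x l \<noteq> 0" "\<not> x l \<le> -1" using nz \<open>\<not> (\<exists>l. x l \<le> -1)\<close> by auto
            then show "x l \<ge> 1" by linarith
          qed
          from allpos[OF rs this, of j] c0 show False by simp
        qed
        then obtain l where "x l \<le> -1" by auto
        hence am: "a \<le> -1" using hx by (meson atLeastAtMost_iff order_trans)
        show ?thesis using False x1 cm am ab unfolding z_def pareto_set_def by auto
      qed
      define x' where "x' = x(j := z)"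
      have hx': "\<forall>i. x' i \<in> {a..b} \<and> x' i \<noteq> 0"
        using hx zP unfolding x'_def pareto_set_def by auto
      have lt: "(\<Sum>i\<in>UNIV. nat (x' i - a)) < n"
      proof -
        have "(\<Sum>i\<in>UNIV. nat (x' i - a)) < (\<Sum>i\<in>UNIV. nat (x i - a))"
        proof (rule sum_strict_mono_ex1)
          show "finite (UNIV :: 'a set)" by simp
          show "\<forall>i\<in>UNIV. nat (x' i - a) \<le> nat (x i - a)"
            using zP unfolding x'_def by auto
          show "\<exists>i\<in>UNIV. nat (x' i - a) < nat (x i - a)"
            using zP hx unfolding x'_def pareto_set_def by (intro bexI[of _ j]) auto
        qed
        then show ?thesis using mu by simp
      qed
      from less.IH[OF lt] hx' obtain seq where
        s: "legal_seq {a..b} 0 W x' seq \<and> (\<forall>i. run_seq x' seq i \<in> {a..b} \<and> run_seq x' seq i \<noteq> 0) \<and>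
        (\<forall>j. run_seq x' seq j > 0 \<longrightarrow>
           social_cost W (run_seq x' seq) j (run_seq x' seq j - 1) > social_cost W (run_seq x' seq) j (run_seq x' seq j))"
        by blast
      show ?thesis
        by (rule exI[of _ "(j, z) # seq"]) (use s zP in \<open>simp add: x'_def\<close>)
    qed
  qed
qed



lemma phase2:
  assumes rs: "row_stochastic W" and ab: "a \<le> 0" "0 \<le> b"
  shows "\<forall>x. (\<Sum>i\<in>UNIV. nat (b - x i)) = n \<longrightarrow> (\<forall>i. x i \<in> {a..b}) \<longrightarrow>
     (\<forall>k. x k > 0 \<longrightarrow> social_cost W x k (x k - 1) > social_cost W x k (x k)) \<longrightarrow>
     (\<exists>seq. legal_seq {a..b} 0 W x seq \<and> equilibrium {a..b} 0 W (run_seq x seq) \<and>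
        (\<forall>k. x k > 0 \<longrightarrow> run_seq x seq k = x k) \<and>
        ((\<forall>i. x i \<le> -1) \<longrightarrow> (\<forall>i. run_seq x seq i \<le> -1)))"
proof (induction n rule: less_induct)
  case (less n)
  show ?case
  proof (intro allI impI)
    fix x :: "'a \<Rightarrow> int"
    assume mu: "(\<Sum>i\<in>UNIV. nat (b - x i)) = n" and hx: "\<forall>i. x i \<in> {a..b}"
      and hp: "\<forall>k. x k > 0 \<longrightarrow> social_cost W x k (x k - 1) > social_cost W x k (x k)"
    show "\<exists>seq. legal_seq {a..b} 0 W x seq \<and> equilibrium {a..b} 0 W (run_seq x seq) \<and>
        (\<forall>k. x k > 0 \<longrightarrow> run_seq x seq k = x k) \<and>
        ((\<forall>i. x i \<le> -1) \<longrightarrow> (\<forall>i. run_seq x seq i \<le> -1))"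
    proof (cases "\<exists>j. x j < 0 \<and> social_cost W x j (x j + 1) \<le> social_cost W x j (x j)")
      case False
      have "equilibrium {a..b} 0 W x"
        unfolding equilibrium_def
      proof
        fix i
        consider "x i > 0" | "x i < 0" | "x i = 0" by linarith
        then show "pareto_set {a..b} 0 W x i = {x i}"
        proof cases
          case 1 then show ?thesis using pareto_pos[OF rs, of x i a b] hx hp by auto
        next
          case 2 then show ?thesis using pareto_neg[OF rs, of x i a b] hx False by (auto simp: not_le)
        next
          case 3 then show ?thesis by (rule pareto_zero[OF _ ab])
        qed
      qed
      then show ?thesis by (intro exI[of _ "[]"]) auto
    next
      case True
      then obtain j where j: "x j < 0" "social_cost W x j (x j + 1) \<le> social_cost W x j (x j)" by auto
      define z where "z = x j + 1"
      have zP: "z \<in> pareto_set {a..b} 0 W x j"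
        using j hx[rule_format, of j] ab unfolding z_def pareto_set_def by auto
      define x' where "x' = x(j := z)"
      have hx': "\<forall>i. x' i \<in> {a..b}"
        using hx zP unfolding x'_def pareto_set_def by auto
      have hp': "\<forall>k. x' k > 0 \<longrightarrow> social_cost W x' k (x' k - 1) > social_cost W x' k (x' k)"
      proof (intro allI impI)
        fix k assume k: "x' k > 0"
        have kj: "k \<noteq> j" using k j unfolding x'_def z_def by auto
        hence xk: "x' k = x k" unfolding x'_def by simp
        have "social_cost W x' k (x k - 1) - social_cost W x' k (x k) =
              social_cost W x k (x k - 1) - social_cost W x k (x k)"
          unfolding x'_def by (rule pres) (use k xk j in \<open>auto simp: z_def\<close>)
        then show "social_cost W x' k (x' k - 1) > social_cost W x' k (x' k)"
          using hp k xk by auto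
      qed
      have pos_same: "\<forall>k. x k > 0 \<longrightarrow> x' k = x k" using j unfolding x'_def by auto
      have neg_keep: "(\<forall>i. x i \<le> -1) \<longrightarrow> (\<forall>i. x' i \<le> -1)"
      proof
        assume an: "\<forall>i. x i \<le> -1"
        have "x j \<noteq> -1"
        proof
          assume "x j = -1"
          with j(2) have "social_cost W x j 0 \<le> social_cost W x j (-1)" by simp
          with allneg[OF rs an, of j] show False by simp
        qed
        hence "z \<le> -1" using an[rule_format, of j] unfolding z_def by linarith
        then show "\<forall>i. x' i \<le> -1" using an unfolding x'_def by auto
      qed
      have lt: "(\<Sum>i\<in>UNIV. nat (b - x' i)) < n"
      proof -
        have "(\<Sum>i\<in>UNIV. nat (b - x' i)) < (\<Sum>i\<in>UNIV. nat (b - x i))"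
        proof (rule sum_strict_mono_ex1)
          show "finite (UNIV :: 'a set)" by simp
          show "\<forall>i\<in>UNIV. nat (b - x' i) \<le> nat (b - x i)"
            unfolding x'_def z_def by auto
          show "\<exists>i\<in>UNIV. nat (b - x' i) < nat (b - x i)"
            using j ab unfolding x'_def z_def by (intro bexI[of _ j]) auto
        qed
        then show ?thesis using mu by simp
      qed
      from less.IH[OF lt] hx' hp' obtain seq where
        s: "legal_seq {a..b} 0 W x' seq \<and> equilibrium {a..b} 0 W (run_seq x' seq) \<and>
        (\<forall>k. x' k > 0 \<longrightarrow> run_seq x' seq k = x' k) \<and>
        ((\<forall>i. x' i \<le> -1) \<longrightarrow> (\<forall>i. run_seq x' seq i \<le> -1))"
        by blast
      show ?thesis
      proof (rule exI[of _ "(j, z) # seq"], intro conjI)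
        show "legal_seq {a..b} 0 W x ((j, z) # seq)" using s zP unfolding x'_def by simp
        show "equilibrium {a..b} 0 W (run_seq x ((j, z) # seq))" using s unfolding x'_def by simp
        show "\<forall>k. x k > 0 \<longrightarrow> run_seq x ((j, z) # seq) k = x k"
          using s pos_same unfolding x'_def by simp
        show "(\<forall>i. x i \<le> -1) \<longrightarrow> (\<forall>i. run_seq x ((j, z) # seq) i \<le> -1)"
          using s neg_keep unfolding x'_def by simp
      qed
    qed
  qed
qed



theorem theorem4:
  fixes W :: "'v::finite \<Rightarrow> 'v \<Rightarrow> real" and a b :: int and x0 :: "'v \<Rightarrow> int"
  assumes "row_stochastic W"
    and "a \<le> 0" and "0 \<le> b"
    and "\<forall>i. x0 i \<in> {a..b}"
    and "\<forall>i. x0 i \<noteq> 0"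
  shows "\<exists>seq. legal_seq {a..b} 0 W x0 seq \<and>
           ((\<exists>z. z \<noteq> 0 \<and> (\<forall>i. run_seq x0 seq i = z)) \<or>
            (equilibrium {a..b} 0 W (run_seq x0 seq) \<and> \<not> is_consensus (run_seq x0 seq)))"
proof -
  have h0: "\<forall>i. x0 i \<in> {a..b} \<and> x0 i \<noteq> 0" using assms(4,5) by auto
  from phase1[OF assms(1-3), of "\<Sum>i\<in>UNIV. nat (x0 i - a)"] h0
  obtain s1 where s1: "legal_seq {a..b} 0 W x0 s1" "\<forall>i. run_seq x0 s1 i \<in> {a..b} \<and> run_seq x0 s1 i \<noteq> 0"
    "\<forall>j. run_seq x0 s1 j > 0 \<longrightarrow>
           social_cost W (run_seq x0 s1) j (run_seq x0 s1 j - 1) > social_cost W (run_seq x0 s1) j (run_seq x0 s1 j)"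
    by blast
  define y where "y = run_seq x0 s1"
  have hy: "\<forall>i. y i \<in> {a..b}" using s1(2) unfolding y_def by auto
  have hp: "\<forall>k. y k > 0 \<longrightarrow> social_cost W y k (y k - 1) > social_cost W y k (y k)"
    using s1(3) unfolding y_def by auto
  from phase2[OF assms(1-3), of "\<Sum>i\<in>UNIV. nat (b - y i)"] hy hp
  obtain s2 where s2: "legal_seq {a..b} 0 W y s2" "equilibrium {a..b} 0 W (run_seq y s2)"
    "\<forall>k. y k > 0 \<longrightarrow> run_seq y s2 k = y k"
    "(\<forall>i. y i \<le> -1) \<longrightarrow> (\<forall>i. run_seq y s2 i \<le> -1)"
    by blast
  define zz where "zz = run_seq x0 (s1 @ s2)"
  have zz: "zz = run_seq y s2" unfolding zz_def y_def by (rule run_append)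
  have leg: "legal_seq {a..b} 0 W x0 (s1 @ s2)"
    using s1(1) s2(1) unfolding legal_append y_def by simp
  have nz: "\<exists>i. zz i \<noteq> 0"
  proof (cases "\<exists>k. y k > 0")
    case True
    then obtain k where "y k > 0" by auto
    then show ?thesis using s2(3) zz by (intro exI[of _ k]) auto
  next
    case False
    have "\<forall>i. y i \<le> -1"
    proof
      fix i have "y i \<noteq> 0" "\<not> y i > 0" using s1(2) False unfolding y_def by auto
      then show "y i \<le> -1" by linarith
    qed
    with s2(4) have "\<forall>i. zz i \<le> -1" using zz by simp
    then have "zz undefined \<le> -1" by blast
    then show ?thesis by (intro exI[of _ undefined]) simp
  qed
  have eqz: "equilibrium {a..b} 0 W zz" using s2(2) zz by simp
  have fin: "(\<exists>z. z \<noteq> 0 \<and> (\<forall>i. zz i = z)) \<or> (equilibrium {a..b} 0 W zz \<and> \<not> is_consensus zz)"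
  proof (cases "is_consensus zz")
    case True
    then obtain c where c: "\<forall>i. zz i = c" unfolding is_consensus_def by auto
    from nz obtain i where "zz i \<noteq> 0" by blast
    with c have "c \<noteq> 0" by simp
    with c show ?thesis by blast
  next
    case False
    with eqz show ?thesis by blast
  qed
  show ?thesis
    by (rule exI[of _ "s1 @ s2"]) (rule conjI[OF leg], unfold zz_def[symmetric], rule fin)
qed

end
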